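(* In the setting below, any two correct processes are intertwined: for all $i,j\in W$, every quorum $Q$ of $i$ and every quorum $Q'$ of $j$ satisfy $|Q\cap Q'|>f$.
   Context: Processes and faults: $\Pi$ is a finite set of processes, $f\ge0$ a known integer; $W\subseteq\Pi$ is the set of correct processes and $F=\Pi\setminus W$ the Byzantine faulty processes, $|F|\le f$. Faulty processes may declare arbitrary slices. Slices and quorums: each process $i$ has a set $\mathcal{S}_i$ of slices (subsets of $\Pi$). $Q\subseteq\Pi$ is a quorum if every $i\in Q$ has some $S\in\mathcal{S}_i$ with $S\subseteq Q$; a quorum of $i$ is a quorum containing $i$. Two correct processes $i,j$ are intertwined if $|Q\cap Q'|>f$ for every quorum $Q$ of $i$ and every quorum $Q'$ of $j$. Knowledge graph: each process $i$ is given $\mathit{PD}_i\subseteq\Pi$; $G_{\mathit{di}}$ is the directed graph on $\Pi$ with edge $(i,j)$ iff $j\in\mathit{PD}_i$. A sink component is a strongly connected component of $G_{\mathit{di}}$ from which no path leads outside it. A directed graph is $k$-OSR if (1) its underlying undirected graph is connected; (2) its condensation into strongly connected components has exactly one sink $G_{\mathit{sink}}$; (3) $G_{\mathit{sink}}$ is $k$-strongly connected (every ordered pair of its nodes joined by $k$ node-disjoint directed paths); (4) from every node outside $G_{\mathit{sink}}$ to every node in it there are at least $k$ node-disjoint directed paths. Standing assumption: $G_{\mathit{di}}$ has a unique sink component with vertex set $V_{\mathit{sink}}$, which contains at least $2f+1$ correct processes, and the graph obtained from $G_{\mathit{di}}$ by deleting $F$ is $(f+1)$-OSR. Slice construction: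 let $m=\lceil (|V_{\mathit{sink}}|+f+1)/2\rceil$. Every correct $i\in V_{\mathit{sink}}$ has $\mathcal{S}_i=\{S\subseteq V_{\mathit{sink}}: |S|=m\}$. Every correct $i\notin V_{\mathit{sink}}$ is given a set $V_i\subseteq V_{\mathit{sink}}$ containing at least $f+1$ correct members of $V_{\mathit{sink}}$, and has $\mathcal{S}_i=\{S\subseteq V_i: |S|=f+1\}$. *)

theory Defs
  imports Complex_Main
begin

definition is_quorum :: "'p set \<Rightarrow> ('p \<Rightarrow> 'p set set) \<Rightarrow> 'p set \<Rightarrow> bool" where
  "is_quorum P S Q \<longleftrightarrow> Q \<subseteq> P \<and> (\<forall>i\<in>Q. \<exists>T\<in>S i. T \<subseteq> Q)"

definition intertwined :: "'p set \<Rightarrow> ('p \<Rightarrow> 'p set set) \<Rightarrow> nat \<Rightarrow> 'p \<Rightarrow> 'p \<Rightarrow> bool" where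
  "intertwined P S f i j \<longleftrightarrow>
     (\<forall>Q Q'. is_quorum P S Q \<and> i \<in> Q \<and> is_quorum P S Q' \<and> j \<in> Q' \<longrightarrow> card (Q \<inter> Q') > f)"

definition di_edges :: "'p set \<Rightarrow> ('p \<Rightarrow> 'p set) \<Rightarrow> ('p \<times> 'p) set" where
  "di_edges P PD = {(i, j). i \<in> P \<and> j \<in> P \<and> j \<in> PD i}"

definition scc :: "'p set \<Rightarrow> ('p \<times> 'p) set \<Rightarrow> 'p set \<Rightarrow> bool" where
  "scc V E C \<longleftrightarrow> C \<noteq> {} \<and> C \<subseteq> V \<and> (\<forall>u\<in>C. \<forall>v\<in>C. (u, v) \<in> E\<^sup>*) \<and>
     (\<forall>u\<in>C. \<forall>x\<in>V. (u, x) \<in> E\<^sup>* \<and> (x, u) \<in> E\<^sup>* \<longrightarrow> x \<in> C)"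

definition sink_component :: "'p set \<Rightarrow> ('p \<times> 'p) set \<Rightarrow> 'p set \<Rightarrow> bool" where
  "sink_component V E C \<longleftrightarrow> scc V E C \<and> (\<forall>u\<in>C. \<forall>v. (u, v) \<in> E\<^sup>* \<longrightarrow> v \<in> C)"

definition is_path :: "'p set \<Rightarrow> ('p \<times> 'p) set \<Rightarrow> 'p list \<Rightarrow> 'p \<Rightarrow> 'p \<Rightarrow> bool" where
  "is_path V E xs u v \<longleftrightarrow> xs \<noteq> [] \<and> hd xs = u \<and> last xs = v \<and> distinct xs \<and> set xs \<subseteq> V \<and>
     (\<forall>n < length xs - 1. (xs ! n, xs ! Suc n) \<in> E)"

definition interior :: "'p list \<Rightarrow> 'p set" where
  "interior xs = set (butlast (tl xs))"

definition disjoint_paths :: "'p set \<Rightarrow> ('p \<times> 'p) set \<Rightarrow> nat \<Rightarrow> 'p \<Rightarrow> 'p \<Rightarrow> bool" where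
  "disjoint_paths V E k u v \<longleftrightarrow> (\<exists>Ps. finite Ps \<and> card Ps = k \<and> (\<forall>p\<in>Ps. is_path V E p u v) \<and>
     (\<forall>p\<in>Ps. \<forall>q\<in>Ps. p \<noteq> q \<longrightarrow> interior p \<inter> interior q = {}))"

definition k_strongly_connected :: "'p set \<Rightarrow> ('p \<times> 'p) set \<Rightarrow> nat \<Rightarrow> bool" where
  "k_strongly_connected C E k \<longleftrightarrow>
     (\<forall>u\<in>C. \<forall>v\<in>C. u \<noteq> v \<longrightarrow> disjoint_paths C (E \<inter> (C \<times> C)) k u v)"

definition k_OSR :: "'p set \<Rightarrow> ('p \<times> 'p) set \<Rightarrow> nat \<Rightarrow> bool" where
  "k_OSR V E k \<longleftrightarrow>
     (\<forall>u\<in>V. \<forall>v\<in>V. (u, v) \<in> (E \<union> E\<inverse>)\<^sup>*) \<and>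
     (\<exists>!C. sink_component V E C) \<and>
     (\<forall>C. sink_component V E C \<longrightarrow>
        k_strongly_connected C E k \<and> (\<forall>u\<in>V - C. \<forall>v\<in>C. disjoint_paths V E k u v))"

end

theory Submission
  imports Defs
begin

theorem theorem3:
  fixes P :: "'p set" and f :: nat and W :: "'p set"
    and S :: "'p \<Rightarrow> 'p set set" and PD :: "'p \<Rightarrow> 'p set"
    and Vsink :: "'p set" and Vi :: "'p \<Rightarrow> 'p set"
  assumes finP: "finite P"
    and W_sub: "W \<subseteq> P"
    and faulty_bound: "card (P - W) \<le> f"
    and PD_sub: "\<forall>i\<in>P. PD i \<subseteq> P"
    and slices_sub: "\<forall>i\<in>P. \<forall>T\<in>S i. T \<subseteq> P"
    and sink: "sink_component P (di_edges P PD) Vsink"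
    and sink_unique: "\<forall>C. sink_component P (di_edges P PD) C \<longrightarrow> C = Vsink"
    and sink_correct: "card (Vsink \<inter> W) \<ge> 2 * f + 1"
    and osr: "k_OSR W (di_edges P PD \<inter> (W \<times> W)) (f + 1)"
    and slices_sink: "\<forall>i\<in>W \<inter> Vsink.
        S i = {T. T \<subseteq> Vsink \<and> card T = nat \<lceil>real (card Vsink + f + 1) / 2\<rceil>}"
    and slices_out: "\<forall>i\<in>W - Vsink. Vi i \<subseteq> Vsink \<and> card (Vi i \<inter> W) \<ge> f + 1 \<and>
        S i = {T. T \<subseteq> Vi i \<and> card T = f + 1}"
  shows "\<forall>i\<in>W. \<forall>j\<in>W. intertwined P S f i j"
proof -
  define m where "m = nat \<lceil>real (card Vsink + f + 1) / 2\<rceil>"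
  have VP: "Vsink \<subseteq> P" using sink unfolding sink_component_def scc_def by auto
  have finV: "finite Vsink" using VP finP finite_subset by blast
  have aux: "\<And>x c r::real. x / 2 \<le> c \<Longrightarrow> r = c \<Longrightarrow> x \<le> 2 * r" by linarith
  have m2: "2 * m \<ge> card Vsink + f + 1"
  proof -
    have c1: "real (card Vsink + f + 1) / 2 \<le> real_of_int \<lceil>real (card Vsink + f + 1) / 2\<rceil>"
      by (rule le_of_int_ceiling)
    have "\<lceil>real (card Vsink + f + 1) / 2\<rceil> \<ge> 0" by simp
    then have c2: "real m = real_of_int \<lceil>real (card Vsink + f + 1) / 2\<rceil>"
      unfolding m_def by simp
    have "real (card Vsink + f + 1) \<le> 2 * real m"
      by (rule aux[OF c1 c2])
    then show ?thesis by linarith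
  qed
  have sinkq: "\<exists>T. T \<subseteq> Q \<and> T \<subseteq> Vsink \<and> card T = m"
    if "j \<in> W \<inter> Vsink" "is_quorum P S Q" "j \<in> Q" for j Q
  proof -
    from that obtain T where "T \<in> S j" "T \<subseteq> Q" unfolding is_quorum_def by blast
    then show ?thesis using slices_sink that(1) unfolding m_def by auto
  qed
  have key: "\<exists>T. T \<subseteq> Q \<and> T \<subseteq> Vsink \<and> card T = m"
    if "i \<in> W" "is_quorum P S Q" "i \<in> Q" for i Q
  proof (cases "i \<in> Vsink")
    case True
    then show ?thesis using sinkq that by blast
  next
    case False
    from that obtain T where T: "T \<in> S i" "T \<subseteq> Q" unfolding is_quorum_def by blast
    have Vi: "Vi i \<subseteq> Vsink" "S i = {T. T \<subseteq> Vi i \<and> card T = f + 1}"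
      using slices_out that(1) False by auto
    have TV: "T \<subseteq> Vsink" "card T = f + 1" using T Vi by auto
    have "T - W \<subseteq> P - W" using TV VP by auto
    then have "card (T - W) \<le> f"
      using faulty_bound card_mono[OF finite_Diff[OF finP]] by (meson order_trans)
    moreover have "T \<inter> W = {} \<Longrightarrow> T - W = T" by blast
    ultimately have "T \<inter> W \<noteq> {}" using TV by auto
    then obtain j where "j \<in> T" "j \<in> W" by blast
    then have "j \<in> W \<inter> Vsink" "j \<in> Q" using TV T by auto
    then show ?thesis using sinkq[of j Q] that(2) by simp
  qed
  show ?thesis unfolding intertwined_def
  proof (intro ballI allI impI)
    fix i j Q Q' assume ij: "i \<in> W" "j \<in> W"
      and q: "is_quorum P S Q \<and> i \<in> Q \<and> is_quorum P S Q' \<and> j \<in> Q'"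
    obtain T where T: "T \<subseteq> Q" "T \<subseteq> Vsink" "card T = m" using key ij q by blast
    obtain T' where T': "T' \<subseteq> Q'" "T' \<subseteq> Vsink" "card T' = m" using key ij q by blast
    have fT: "finite T" "finite T'" using T T' finV finite_subset by auto
    have "card (T \<union> T') \<le> card Vsink" using T T' finV by (intro card_mono) auto
    moreover have "card (T \<union> T') + card (T \<inter> T') = card T + card T'"
      using card_Un_Int[OF fT] by simp
    ultimately have "card (T \<inter> T') > f" using m2 T T' by linarith
    moreover have "card (T \<inter> T') \<le> card (Q \<inter> Q')"
      using T T' VP finP q unfolding is_quorum_def
      by (intro card_mono) (auto intro: finite_subset)
    ultimately show "card (Q \<inter> Q') > f" by linarith
  qed
qed

end
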